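(* Let $\Sigma$ be a graded alphabet, $t\in T_\Sigma$, and $A_t=(\Sigma,Q,\nu,\delta)$ the subtree automaton of $t$. Then for every state $r\in Q$, the down language satisfies $L_r(A_t)=\{\mathrm{h}(r)\}$.
   Context: A graded alphabet is a finite set $\Sigma=\bigcup_{k\in\mathbb{N}}\Sigma_k$; $T_\Sigma$ is the set of trees $f(t_1,\ldots,t_k)$ with $f\in\Sigma_k$. A RWTA is $A=(\Sigma,Q,\nu,\delta)$ with $Q$ finite, $\nu:Q\to\mathbb{N}$, $\delta\subseteq\bigcup_k Q\times\Sigma_k\times Q^k$; $\delta(f,q_1,\ldots,q_k)=\{q\mid(q,f,q_1,\ldots,q_k)\in\delta\}$, extended to subsets by union over tuples; $\Delta(f(t_1,\ldots,t_k))=\delta(f,\Delta(t_1),\ldots,\Delta(t_k))$. The down language of a state $q$ is $L_q(A)=\{s\in T_\Sigma\mid q\in\Delta(s)\}$. For $t=f(t_1,\ldots,t_k)$, $\mathrm{SubTree}(t)=\{t\}\cup\bigcup_j\mathrm{SubTree}(t_j)$. The tree $t^\sharp$ is obtained from $t$ by indexing each symbol occurrence with its position in a preorder traversal (indexed symbols are distinct and keep their arity); $\Sigma_{t^\sharp}$ is the set of indexed symbols of $t^\sharp$; $\mathrm{h}$ erases indices. The subtree automaton of $t$ is $A_t=(\Sigma,Q,\nu,\delta)$ with $Q=\mathrm{SubTree}(t^\sharp)$, $\nu\equiv1$, and for $f\in\Sigma_{t^\sharp}$ of arity $k$ and $t_1,\ldots,t_{k+1}\in Q$: $t_{k+1}\in\delta(\mathrm{h}(f),t_1,\ldots,t_k)$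 iff $t_{k+1}=f(t_1,\ldots,t_k)$. *)

theory Defs
  imports Main
begin

datatype 'f tree = Node 'f "'f tree list"

fun wf_tree :: "'f set \<Rightarrow> ('f \<Rightarrow> nat) \<Rightarrow> 'f tree \<Rightarrow> bool" where
  "wf_tree Sig ar (Node f ts) \<longleftrightarrow>
     f \<in> Sig \<and> length ts = ar f \<and> (\<forall>t\<in>set ts. wf_tree Sig ar t)"

fun subtrees :: "'f tree \<Rightarrow> 'f tree set" where
  "subtrees (Node f ts) = insert (Node f ts) (\<Union> (set (map subtrees ts)))"

fun symbols :: "'f tree \<Rightarrow> 'f set" where
  "symbols (Node f ts) = insert f (\<Union> (set (map symbols ts)))"

fun idx :: "nat \<Rightarrow> 'f tree \<Rightarrow> ('f \<times> nat) tree \<times> nat"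
and idxs :: "nat \<Rightarrow> 'f tree list \<Rightarrow> ('f \<times> nat) tree list \<times> nat" where
  "idx n (Node f ts) = (let (ts', m) = idxs (Suc n) ts in (Node (f, n) ts', m))"
| "idxs n [] = ([], n)"
| "idxs n (t # ts) = (let (t', m) = idx n t; (ts', k) = idxs m ts in (t' # ts', k))"

definition sharp :: "'f tree \<Rightarrow> ('f \<times> nat) tree" where
  "sharp t = fst (idx 0 t)"

definition h :: "('f \<times> nat) tree \<Rightarrow> 'f tree" where
  "h t = map_tree fst t"

text \<open>RWTA (Sigma, Q, nu, delta): the alphabet is fixed externally; a transition
(q, f, [q1,...,qk]) means q \<in> delta(f, q1, ..., qk).\<close>
record ('q, 'f) rwta =
  states :: "'q set"
  weight :: "'q \<Rightarrow> nat"
  trans :: "('q \<times> 'f \<times> 'q list) set"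

fun Delta :: "('q \<times> 'f \<times> 'q list) set \<Rightarrow> 'f tree \<Rightarrow> 'q set" where
  "Delta \<delta> (Node f ts) =
     {q. \<exists>qs. (q, f, qs) \<in> \<delta> \<and> list_all2 (\<in>) qs (map (Delta \<delta>) ts)}"

definition down_lang :: "'f set \<Rightarrow> ('f \<Rightarrow> nat) \<Rightarrow> ('q, 'f) rwta \<Rightarrow> 'q \<Rightarrow> 'f tree set" where
  "down_lang Sig ar A q = {s. wf_tree Sig ar s \<and> q \<in> Delta (trans A) s}"

definition subtree_automaton :: "('f \<Rightarrow> nat) \<Rightarrow> 'f tree \<Rightarrow> (('f \<times> nat) tree, 'f) rwta" where
  "subtree_automaton ar t =
     (let Q = subtrees (sharp t) in
      \<lparr> states = Q,
        weight = (\<lambda>_. 1),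
        trans = {(q, fst f, qs) | q f qs.
                   f \<in> symbols (sharp t) \<and> length qs = ar (fst f) \<and> set qs \<subseteq> Q \<and>
                   q \<in> Q \<and> q = Node f qs} \<rparr>)"

end

theory Submission
  imports Defs
begin

lemma h_Node: "h (Node f ts) = Node (fst f) (map h ts)"
  by (simp add: h_def)

lemma idx_erase:
  fixes t :: "'f tree" and ts :: "'f tree list"
  shows "map_tree fst (fst (idx n t)) = t"
  and "map (map_tree fst) (fst (idxs n ts)) = ts"
proof (induction n t and n ts rule: idx_idxs.induct)
  case (1 n f ts)
  then show ?case by (simp add: case_prod_beta)
next
  case (2 n)
  then show ?case by simp
next
  case (3 n t ts)
  then show ?case by (simp add: case_prod_beta) (metis prod.collapse)
qed

lemma h_sharp: "h (sharp t) = t"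
  by (simp add: h_def sharp_def idx_erase)

lemma subtrees_self: "u \<in> subtrees u"
  by (cases u) auto

lemma subtrees_trans: "r \<in> subtrees u \<Longrightarrow> subtrees r \<subseteq> subtrees u \<and> symbols r \<subseteq> symbols u"
proof (induction u)
  case (Node f ts)
  then show ?case by fastforce
qed

lemma wf_sub: "r \<in> subtrees u \<Longrightarrow> wf_tree Sig ar (h u) \<Longrightarrow> wf_tree Sig ar (h r)"
proof (induction u)
  case (Node f ts)
  then show ?case by (auto simp: h_Node)
qed


lemma Delta_h:
  fixes S and Q and ar
  defines "\<delta> \<equiv> {(q, fst f, qs) | q f qs. f \<in> S \<and> length qs = ar (fst f) \<and> set qs \<subseteq> Q \<and>
                   q \<in> Q \<and> q = Node f qs}"
  shows "r \<in> Delta \<delta> s \<Longrightarrow> s = h r"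
proof (induction s arbitrary: r)
  case (Node g ss)
  then obtain qs where q: "(r, g, qs) \<in> \<delta>" and l: "list_all2 (\<in>) qs (map (Delta \<delta>) ss)" by auto
  from q obtain f where r: "r = Node f qs" "g = fst f" unfolding \<delta>_def by auto
  have "ss = map h qs"
    using l Node.IH
    by (auto simp: list_all2_conv_all_nth intro!: nth_equalityI)
  then show ?case using r by (simp add: h_Node)
qed

lemma Delta_in:
  fixes S and Q and ar
  defines "\<delta> \<equiv> {(q, fst f, qs) | q f qs. f \<in> S \<and> length qs = ar (fst f) \<and> set qs \<subseteq> Q \<and>
                   q \<in> Q \<and> q = Node f qs}"
  shows "subtrees r \<subseteq> Q \<Longrightarrow> symbols r \<subseteq> S \<Longrightarrow> wf_tree Sig ar (h r) \<Longrightarrow> r \<in> Delta \<delta> (h r)"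
proof (induction r)
  case (Node f qs)
  have sub: "\<And>q. q \<in> set qs \<Longrightarrow> q \<in> Q"
    using Node.prems(1) subtrees_self by fastforce
  have ih: "\<And>q. q \<in> set qs \<Longrightarrow> q \<in> Delta \<delta> (h q)"
    using Node.IH Node.prems by (auto simp: h_Node)
     (meson Sup_le_iff imageI)
  have "(Node f qs, fst f, qs) \<in> \<delta>"
    using Node.prems sub unfolding \<delta>_def by (cases f) (auto simp: h_Node)
  moreover have "list_all2 (\<in>) qs (map (Delta \<delta>) (map h qs))"
    using ih by (auto simp: list_all2_conv_all_nth)
  ultimately show ?case by (auto simp: h_Node)
qed

theorem corollary3:
  fixes Sig :: "'f set" and ar :: "'f \<Rightarrow> nat" and t :: "'f tree"
  assumes "finite Sig"
    and "wf_tree Sig ar t"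
    and "r \<in> states (subtree_automaton ar t)"
  shows "down_lang Sig ar (subtree_automaton ar t) r = {h r}"
proof -
  have rs: "r \<in> subtrees (sharp t)" using assms(3) by (simp add: subtree_automaton_def Let_def)
  have tr: "trans (subtree_automaton ar t) = {(q, fst f, qs) | q f qs. f \<in> symbols (sharp t) \<and> length qs = ar (fst f) \<and> set qs \<subseteq> subtrees (sharp t) \<and>
                   q \<in> subtrees (sharp t) \<and> q = Node f qs}"
    by (simp add: subtree_automaton_def Let_def)
  have wf: "wf_tree Sig ar (h r)"
    using wf_sub[OF rs] assms(2) h_sharp by metis
  have "r \<in> Delta (trans (subtree_automaton ar t)) (h r)"
    unfolding tr
    by (rule Delta_in[of r "subtrees (sharp t)" "symbols (sharp t)" Sig ar, OF conjunct1[OF subtrees_trans[OF rs]] conjunct2[OF subtrees_trans[OF rs]] wf])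
  moreover have "\<And>s. r \<in> Delta (trans (subtree_automaton ar t)) s \<Longrightarrow> s = h r"
    unfolding tr by (rule Delta_h[of r "symbols (sharp t)" ar "subtrees (sharp t)"])
  ultimately show ?thesis using wf unfolding down_lang_def by blast
qed

end
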